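(* Let $(X,\Gamma)$ be a $(\mu,\nu)$-path system space. For every $\delta\ge0$ and $\varepsilon\ge0$ there exists $\theta\ge0$ with the following property. Let $A,B\subseteq X$ be subsets with $\delta$-constricting maps $\pi_A\colon X\to A$ and $\pi_B\colon X\to B$, and let $Y\subseteq X$ be non-empty, such that $\operatorname{diam}_A(B)\le\varepsilon$, $\operatorname{diam}_B(A)\le\varepsilon$, $\operatorname{diam}_A(Y)\le\varepsilon$, $\operatorname{diam}_B(Y)\le\varepsilon$, $d(A,Y)\le\varepsilon$ and $d(B,Y)\le\varepsilon$. Then for every $x\in X$, $\min\{d_A(x,Y),d_B(x,Y)\}\le\theta$.
   Context: A path is a rectifiable continuous map $\alpha\colon[a,b]\to X$ parametrised by arc length; it is a $(\kappa,\lambda)$-quasi-geodesic if $d(\alpha(t),\alpha(t'))\le|t-t'|\le\kappa d(\alpha(t),\alpha(t'))+\lambda$. A $(\mu,\nu)$-path system space $(X,\Gamma)$ is a geodesic metric space $X$ with a collection $\Gamma$ of paths closed under subpaths, such that any two points are joined by an element of $\Gamma$ and every element is a $(\mu,\nu)$-quasi-geodesic. A map $\pi_A\colon X\to A$ onto a subset $A$ is $\delta$-constricting if (CS1) $d(x,\pi_A(x))\le\delta$ for $x\in A$, and (CS2) for all $x,y\in X$ and $\gamma\in\Gamma$ joining $x$ to $y$, if $d(\pi_A(x),\pi_A(y))>\delta$ then $\gamma$ meets $B_X(\pi_A(x),\delta)$ and $B_X(\pi_A(y),\delta)$. Notation: $d_A(x,y)=d(\pi_A(x),\pi_A(y))$,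 $\operatorname{diam}_A(Y)=\operatorname{diam}(\pi_A(Y))$, $d_A(x,Y)=d(\pi_A(x),\pi_A(Y))$, $d_A(Y,Z)=d(\pi_A(Y),\pi_A(Z))$, where $d$ between sets is the infimum of distances. *)

theory Defs
  imports "HOL-Analysis.Analysis"
begin

text \<open>The metric space X is the whole type 'a. A path is a triple (a, b, alpha) with
  alpha restricted to the interval [a,b].\<close>

type_synonym 'a rpath = "real \<times> real \<times> (real \<Rightarrow> 'a)"

definition variation_sums :: "(real \<Rightarrow> 'a::metric_space) \<Rightarrow> real \<Rightarrow> real \<Rightarrow> real set" where
  "variation_sums \<alpha> s t =
     {(\<Sum>i<n. dist (\<alpha> (p i)) (\<alpha> (p (Suc i)))) | p n.
        p 0 = s \<and> p n = t \<and> (\<forall>i<n. p i \<le> p (Suc i))}"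

definition rectifiable_on :: "(real \<Rightarrow> 'a::metric_space) \<Rightarrow> real \<Rightarrow> real \<Rightarrow> bool" where
  "rectifiable_on \<alpha> s t \<longleftrightarrow> bdd_above (variation_sums \<alpha> s t)"

definition length_on :: "(real \<Rightarrow> 'a::metric_space) \<Rightarrow> real \<Rightarrow> real \<Rightarrow> real" where
  "length_on \<alpha> s t = Sup (variation_sums \<alpha> s t)"

definition is_path :: "'a::metric_space rpath \<Rightarrow> bool" where
  "is_path \<gamma> \<longleftrightarrow> (case \<gamma> of (a, b, \<alpha>) \<Rightarrow>
      a \<le> b \<and> continuous_on {a..b} \<alpha> \<and> rectifiable_on \<alpha> a b \<and>
      (\<forall>s t. a \<le> s \<and> s \<le> t \<and> t \<le> b \<longrightarrow> length_on \<alpha> s t = t - s))"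

definition quasi_geodesic :: "real \<Rightarrow> real \<Rightarrow> 'a::metric_space rpath \<Rightarrow> bool" where
  "quasi_geodesic kap lam \<gamma> \<longleftrightarrow> is_path \<gamma> \<and> (case \<gamma> of (a, b, \<alpha>) \<Rightarrow>
      (\<forall>t\<in>{a..b}. \<forall>t'\<in>{a..b}. dist (\<alpha> t) (\<alpha> t') \<le> \<bar>t - t'\<bar> \<and>
                                \<bar>t - t'\<bar> \<le> kap * dist (\<alpha> t) (\<alpha> t') + lam))"

definition joins :: "'a rpath \<Rightarrow> 'a \<Rightarrow> 'a \<Rightarrow> bool" where
  "joins \<gamma> x y \<longleftrightarrow> (case \<gamma> of (a, b, \<alpha>) \<Rightarrow> \<alpha> a = x \<and> \<alpha> b = y)"

definition meets :: "'a rpath \<Rightarrow> 'a set \<Rightarrow> bool" where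
  "meets \<gamma> S \<longleftrightarrow> (case \<gamma> of (a, b, \<alpha>) \<Rightarrow> (\<exists>t\<in>{a..b}. \<alpha> t \<in> S))"

definition geodesic_space :: "'a::metric_space itself \<Rightarrow> bool" where
  "geodesic_space _ \<longleftrightarrow> (\<forall>x y::'a. \<exists>g. g 0 = x \<and> g (dist x y) = y \<and>
      (\<forall>s\<in>{0..dist x y}. \<forall>t\<in>{0..dist x y}. dist (g s) (g t) = \<bar>s - t\<bar>))"

definition path_system_space :: "real \<Rightarrow> real \<Rightarrow> 'a::metric_space rpath set \<Rightarrow> bool" where
  "path_system_space \<mu> \<nu> \<Gamma> \<longleftrightarrow>
     geodesic_space TYPE('a) \<and>
     (\<forall>a b \<alpha> c d. (a, b, \<alpha>) \<in> \<Gamma> \<and> a \<le> c \<and> c \<le> d \<and> d \<le> b \<longrightarrow> (c, d, \<alpha>) \<in> \<Gamma>) \<and>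
     (\<forall>x y. \<exists>\<gamma>\<in>\<Gamma>. joins \<gamma> x y) \<and>
     (\<forall>\<gamma>\<in>\<Gamma>. quasi_geodesic \<mu> \<nu> \<gamma>)"

text \<open>Balls B_X(p,r) are read as closed balls.\<close>
definition constricting :: "'a::metric_space rpath set \<Rightarrow> real \<Rightarrow> 'a set \<Rightarrow> ('a \<Rightarrow> 'a) \<Rightarrow> bool" where
  "constricting \<Gamma> \<delta> A \<pi> \<longleftrightarrow>
     range \<pi> = A \<and>
     (\<forall>x\<in>A. dist x (\<pi> x) \<le> \<delta>) \<and>
     (\<forall>x y. \<forall>\<gamma>\<in>\<Gamma>. joins \<gamma> x y \<and> dist (\<pi> x) (\<pi> y) > \<delta> \<longrightarrow>
         meets \<gamma> (cball (\<pi> x) \<delta>) \<and> meets \<gamma> (cball (\<pi> y) \<delta>))"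

text \<open>diam(S) \<le> e, written out (so unbounded sets do not satisfy it spuriously).\<close>
definition diam_le :: "'a::metric_space set \<Rightarrow> real \<Rightarrow> bool" where
  "diam_le S e \<longleftrightarrow> (\<forall>p\<in>S. \<forall>q\<in>S. dist p q \<le> e)"

end

theory Submission
  imports Defs
begin

lemma qg_facts:
  assumes pss: "path_system_space \<mu> \<nu> \<Gamma>" and g: "(a0, b0, \<alpha>) \<in> \<Gamma>"
  shows "a0 \<le> b0"
    and "\<And>t t'. t \<in> {a0..b0} \<Longrightarrow> t' \<in> {a0..b0} \<Longrightarrow> dist (\<alpha> t) (\<alpha> t') \<le> \<bar>t - t'\<bar>"
    and "\<And>t t'. t \<in> {a0..b0} \<Longrightarrow> t' \<in> {a0..b0} \<Longrightarrow> \<bar>t - t'\<bar> \<le> \<mu> * dist (\<alpha> t) (\<alpha> t') + \<nu>"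
proof -
  have q: "quasi_geodesic \<mu> \<nu> (a0, b0, \<alpha>)" using pss g unfolding path_system_space_def by blast
  then show "a0 \<le> b0" unfolding quasi_geodesic_def is_path_def by auto
  show "\<And>t t'. t \<in> {a0..b0} \<Longrightarrow> t' \<in> {a0..b0} \<Longrightarrow> dist (\<alpha> t) (\<alpha> t') \<le> \<bar>t - t'\<bar>"
    using q unfolding quasi_geodesic_def by auto
  show "\<And>t t'. t \<in> {a0..b0} \<Longrightarrow> t' \<in> {a0..b0} \<Longrightarrow> \<bar>t - t'\<bar> \<le> \<mu> * dist (\<alpha> t) (\<alpha> t') + \<nu>"
    using q unfolding quasi_geodesic_def by auto
qed

lemma lip:
  fixes \<Gamma> :: "'a::metric_space rpath set"
  assumes pss: "path_system_space \<mu> \<nu> \<Gamma>" and cons: "constricting \<Gamma> \<delta> A \<pi>" and d0: "\<delta> \<ge> 0"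
  shows "dist (\<pi> z) (\<pi> w) \<le> 2*\<delta> + \<bar>\<mu>\<bar> * dist z w + \<bar>\<nu>\<bar>"
proof (cases "dist (\<pi> z) (\<pi> w) \<le> \<delta>")
  case True
  have "0 \<le> \<bar>\<mu>\<bar> * dist z w" by simp
  then show ?thesis using True d0 by linarith
next
  case False
  obtain \<gamma> where g: "\<gamma> \<in> \<Gamma>" "joins \<gamma> z w" using pss unfolding path_system_space_def by blast
  obtain a0 b0 \<alpha> where ge: "\<gamma> = (a0, b0, \<alpha>)" by (cases \<gamma>) auto
  have m: "meets \<gamma> (cball (\<pi> z) \<delta>) \<and> meets \<gamma> (cball (\<pi> w) \<delta>)"
  proof -
    have "\<delta> < dist (\<pi> z) (\<pi> w)" using False by simp
    then show ?thesis using cons g unfolding constricting_def by blast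
  qed
  then obtain t1 t2 where t: "t1 \<in> {a0..b0}" "t2 \<in> {a0..b0}" "dist (\<pi> z) (\<alpha> t1) \<le> \<delta>" "dist (\<pi> w) (\<alpha> t2) \<le> \<delta>"
    unfolding meets_def ge by auto
  have ab: "a0 \<le> b0" using qg_facts(1)[OF pss g(1)[unfolded ge]] .
  have e: "\<alpha> a0 = z" "\<alpha> b0 = w" using g(2) unfolding joins_def ge by auto
  have "dist (\<alpha> t1) (\<alpha> t2) \<le> \<bar>t1 - t2\<bar>" using qg_facts(2)[OF pss g(1)[unfolded ge] t(1,2)] .
  also have "\<bar>t1 - t2\<bar> \<le> \<bar>a0 - b0\<bar>" using t(1,2) ab by auto
  also have "\<bar>a0 - b0\<bar> \<le> \<mu> * dist z w + \<nu>" using qg_facts(3)[OF pss g(1)[unfolded ge], of a0 b0] ab e by auto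
  also have "\<mu> * dist z w \<le> \<bar>\<mu>\<bar> * dist z w" by (simp add: mult_right_mono)
  finally have "dist (\<alpha> t1) (\<alpha> t2) \<le> \<bar>\<mu>\<bar> * dist z w + \<bar>\<nu>\<bar>" by linarith
  moreover have "dist (\<pi> z) (\<pi> w) \<le> dist (\<pi> z) (\<alpha> t1) + dist (\<alpha> t1) (\<alpha> t2) + dist (\<alpha> t2) (\<pi> w)"
    by (metis dist_triangle add.commute add_left_mono order_trans)
  ultimately show ?thesis using t(3,4) by (simp add: dist_commute)
qed

lemma lipD:
  fixes \<Gamma> :: "'a::metric_space rpath set"
  assumes pss: "path_system_space \<mu> \<nu> \<Gamma>" and cons: "constricting \<Gamma> \<delta> A \<pi>" and d0: "\<delta> \<ge> 0"
    and "dist z w \<le> D"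
  shows "dist (\<pi> z) (\<pi> w) \<le> 2*\<delta> + \<bar>\<mu>\<bar> * D + \<bar>\<nu>\<bar>"
proof -
  have "\<bar>\<mu>\<bar> * dist z w \<le> \<bar>\<mu>\<bar> * D" using assms(4) by (simp add: mult_left_mono)
  then show ?thesis using lip[OF pss cons d0, of z w] by linarith
qed

theorem mainTheorem8:
  fixes \<Gamma> :: "'a::metric_space rpath set" and \<mu> \<nu> :: real
  assumes "path_system_space \<mu> \<nu> \<Gamma>"
  shows "\<forall>\<delta>\<ge>0. \<forall>\<epsilon>\<ge>0. \<exists>\<theta>\<ge>0. \<forall>(A::'a set) B \<pi>A \<pi>B (Y::'a set).
     constricting \<Gamma> \<delta> A \<pi>A \<and> constricting \<Gamma> \<delta> B \<pi>B \<and> Y \<noteq> {} \<and>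
     diam_le (\<pi>A ` B) \<epsilon> \<and> diam_le (\<pi>B ` A) \<epsilon> \<and>
     diam_le (\<pi>A ` Y) \<epsilon> \<and> diam_le (\<pi>B ` Y) \<epsilon> \<and>
     setdist A Y \<le> \<epsilon> \<and> setdist B Y \<le> \<epsilon>
     \<longrightarrow> (\<forall>x. min (setdist {\<pi>A x} (\<pi>A ` Y)) (setdist {\<pi>B x} (\<pi>B ` Y)) \<le> \<theta>)"
proof (intro allI impI)
  fix \<delta> \<epsilon> :: real
  assume d0: "\<delta> \<ge> 0" and e0: "\<epsilon> \<ge> 0"
  note pss = assms
  define L where "L = (\<lambda>D. 2*\<delta> + \<bar>\<mu>\<bar> * D + \<bar>\<nu>\<bar>)"
  define K where "K = L \<delta> + \<epsilon> + L (\<epsilon>+1) + \<epsilon>"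
  define K' where "K' = \<delta> + K + L (\<epsilon>+1) + \<delta> + \<epsilon> + 1"
  define D where "D = \<delta> + \<bar>\<mu>\<bar> * K' + \<bar>\<nu>\<bar>"
  define \<theta> where "\<theta> = K + \<delta> + \<delta> + L D + 1"
  have L0: "\<And>D. D \<ge> 0 \<Longrightarrow> L D \<ge> 0" unfolding L_def using d0 by simp
  have K0: "K \<ge> 0" unfolding K_def using L0 d0 e0 by simp
  have K'0: "K' \<ge> 0" unfolding K'_def using K0 L0 d0 e0 by simp
  have D0: "D \<ge> 0" unfolding D_def using K'0 d0 by simp
  have LD0: "L D \<ge> 0" using L0 D0 by simp
  have th0: "\<theta> \<ge> 0" unfolding \<theta>_def using K0 d0 LD0 by simp
  show "\<exists>\<theta>\<ge>0. \<forall>(A::'a set) B \<pi>A \<pi>B (Y::'a set).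
     constricting \<Gamma> \<delta> A \<pi>A \<and> constricting \<Gamma> \<delta> B \<pi>B \<and> Y \<noteq> {} \<and>
     diam_le (\<pi>A ` B) \<epsilon> \<and> diam_le (\<pi>B ` A) \<epsilon> \<and>
     diam_le (\<pi>A ` Y) \<epsilon> \<and> diam_le (\<pi>B ` Y) \<epsilon> \<and>
     setdist A Y \<le> \<epsilon> \<and> setdist B Y \<le> \<epsilon>
     \<longrightarrow> (\<forall>x. min (setdist {\<pi>A x} (\<pi>A ` Y)) (setdist {\<pi>B x} (\<pi>B ` Y)) \<le> \<theta>)"
  proof (intro exI[of _ \<theta>] conjI th0 allI impI)
    fix A B :: "'a set" and \<pi>A \<pi>B and Y :: "'a set" and x :: 'a
    assume H: "constricting \<Gamma> \<delta> A \<pi>A \<and> constricting \<Gamma> \<delta> B \<pi>B \<and> Y \<noteq> {} \<and>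
     diam_le (\<pi>A ` B) \<epsilon> \<and> diam_le (\<pi>B ` A) \<epsilon> \<and>
     diam_le (\<pi>A ` Y) \<epsilon> \<and> diam_le (\<pi>B ` Y) \<epsilon> \<and>
     setdist A Y \<le> \<epsilon> \<and> setdist B Y \<le> \<epsilon>"
    then have cA: "constricting \<Gamma> \<delta> A \<pi>A" and cB: "constricting \<Gamma> \<delta> B \<pi>B" and Yne: "Y \<noteq> {}"
      and dBA: "diam_le (\<pi>B ` A) \<epsilon>" and dBY: "diam_le (\<pi>B ` Y) \<epsilon>"
      and sA: "setdist A Y \<le> \<epsilon>" and sB: "setdist B Y \<le> \<epsilon>" by auto
    have rA: "range \<pi>A = A" and rB: "range \<pi>B = B" using cA cB unfolding constricting_def by auto
    have cs1A: "\<And>z. z \<in> A \<Longrightarrow> dist z (\<pi>A z) \<le> \<delta>" using cA unfolding constricting_def by auto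
    have cs1B: "\<And>z. z \<in> B \<Longrightarrow> dist z (\<pi>B z) \<le> \<delta>" using cB unfolding constricting_def by auto
    have Ane: "A \<noteq> {}" and Bne: "B \<noteq> {}" using rA rB by auto
    obtain a y1 where ay: "a \<in> A" "y1 \<in> Y" "dist a y1 < \<epsilon> + 1"
      using setdist_ltE[of A Y "\<epsilon>+1"] sA Ane Yne by force
    obtain b y where yb: "b \<in> B" "y \<in> Y" "dist b y < \<epsilon> + 1"
      using setdist_ltE[of B Y "\<epsilon>+1"] sB Bne Yne by force
    have LA: "\<And>z w E. dist z w \<le> E \<Longrightarrow> dist (\<pi>A z) (\<pi>A w) \<le> L E"
      unfolding L_def using lipD[OF pss cA d0] by blast
    have LB: "\<And>z w E. dist z w \<le> E \<Longrightarrow> dist (\<pi>B z) (\<pi>B w) \<le> L E"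
      unfolding L_def using lipD[OF pss cB d0] by blast
    have "dist (\<pi>A x) (\<pi>A y) \<le> \<theta> \<or> dist (\<pi>B x) (\<pi>B y) \<le> \<theta>"
    proof (rule ccontr)
      assume "\<not> ?thesis"
      then have bigA: "dist (\<pi>A x) (\<pi>A y) > \<theta>" and bigB: "dist (\<pi>B x) (\<pi>B y) > \<theta>" by auto
      obtain \<gamma> where g: "\<gamma> \<in> \<Gamma>" "joins \<gamma> x y" using pss unfolding path_system_space_def by blast
      obtain a0 b0 \<alpha> where ge: "\<gamma> = (a0, b0, \<alpha>)" by (cases \<gamma>) auto
      have gG: "(a0,b0,\<alpha>) \<in> \<Gamma>" using g ge by simp
      have e: "\<alpha> a0 = x" "\<alpha> b0 = y" using g(2) unfolding joins_def ge by auto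
      have "dist (\<pi>A x) (\<pi>A y) > \<delta>" using bigA \<theta>_def K0 LD0 d0 by linarith
      then have "meets \<gamma> (cball (\<pi>A x) \<delta>)" using cA g unfolding constricting_def by blast
      then obtain s where s: "s \<in> {a0..b0}" "dist (\<pi>A x) (\<alpha> s) \<le> \<delta>"
        unfolding meets_def ge by auto
      define r where "r = \<alpha> s"
      have "dist (\<pi>B r) (\<pi>B (\<pi>A x)) \<le> L \<delta>" using LB s(2) by (simp add: r_def dist_commute)
      moreover have "dist (\<pi>B (\<pi>A x)) (\<pi>B a) \<le> \<epsilon>" using dBA ay(1) rA unfolding diam_le_def by blast
      moreover have "dist (\<pi>B a) (\<pi>B y1) \<le> L (\<epsilon>+1)" using LB ay(3) by simp
      moreover have "dist (\<pi>B y1) (\<pi>B y) \<le> \<epsilon>" using dBY ay(2) yb(2) unfolding diam_le_def by blast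
      ultimately have Kr: "dist (\<pi>B r) (\<pi>B y) \<le> K" unfolding K_def
        by (smt (verit) dist_triangle)
      have "dist (\<pi>B x) (\<pi>B r) > \<delta>"
        using bigB Kr dist_triangle[of "\<pi>B x" "\<pi>B y" "\<pi>B r"] \<theta>_def LD0 d0 by linarith
      moreover have sub: "(a0, s, \<alpha>) \<in> \<Gamma>" proof -
        have "\<forall>a b \<alpha> c d. (a, b, \<alpha>) \<in> \<Gamma> \<and> a \<le> c \<and> c \<le> d \<and> d \<le> b \<longrightarrow> (c, d, \<alpha>) \<in> \<Gamma>"
          using pss unfolding path_system_space_def by blast
        then show ?thesis using gG s(1) by (meson atLeastAtMost_iff order_refl)
      qed
      moreover have "joins (a0, s, \<alpha>) x r" unfolding joins_def r_def using e by simp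
      ultimately have "meets (a0, s, \<alpha>) (cball (\<pi>B r) \<delta>)" using cB unfolding constricting_def by blast
      then obtain s2 where s2: "s2 \<in> {a0..s}" "dist (\<pi>B r) (\<alpha> s2) \<le> \<delta>"
        unfolding meets_def by auto
      have "dist (\<pi>B y) (\<pi>B b) \<le> L (\<epsilon>+1)" using LB yb(3) by (simp add: dist_commute)
      moreover have "dist (\<pi>B b) b \<le> \<delta>" using cs1B yb(1) by (simp add: dist_commute)
      ultimately have yB: "dist (\<pi>B y) y \<le> L (\<epsilon>+1) + \<delta> + \<epsilon> + 1"
        using yb(3) by (smt (verit) dist_triangle)
      have qy: "dist (\<alpha> s2) y \<le> K'" unfolding K'_def
        using s2(2) Kr yB by (smt (verit) dist_triangle dist_commute)
      have s2i: "s2 \<in> {a0..b0}" using s2(1) s(1) by auto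
      have b0i: "b0 \<in> {a0..b0}" using s(1) by auto
      have "\<bar>s2 - b0\<bar> \<le> \<mu> * dist (\<alpha> s2) (\<alpha> b0) + \<nu>" using qg_facts(3)[OF pss gG s2i b0i] .
      also have "\<mu> * dist (\<alpha> s2) (\<alpha> b0) \<le> \<bar>\<mu>\<bar> * K'"
        by (metis abs_ge_self abs_ge_zero e(2) mult_mono qy zero_le_dist order_trans)
      finally have "\<bar>s2 - b0\<bar> \<le> \<bar>\<mu>\<bar> * K' + \<bar>\<nu>\<bar>" by linarith
      moreover have "dist (\<alpha> s) (\<alpha> b0) \<le> \<bar>s - b0\<bar>" using qg_facts(2)[OF pss gG s(1) b0i] .
      moreover have "\<bar>s - b0\<bar> \<le> \<bar>s2 - b0\<bar>" using s2(1) s(1) by auto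
      ultimately have "dist r y \<le> \<bar>\<mu>\<bar> * K' + \<bar>\<nu>\<bar>" unfolding r_def e(2)[symmetric] by linarith
      then have "dist (\<pi>A x) y \<le> D" unfolding D_def using s(2) r_def
        by (smt (verit) dist_triangle)
      then have "dist (\<pi>A (\<pi>A x)) (\<pi>A y) \<le> L D" using LA by blast
      moreover have "dist (\<pi>A x) (\<pi>A (\<pi>A x)) \<le> \<delta>" using cs1A rA by blast
      ultimately have "dist (\<pi>A x) (\<pi>A y) \<le> \<delta> + L D" by (smt (verit) dist_triangle)
      then show False using bigA \<theta>_def K0 d0 by linarith
    qed
    moreover have "setdist {\<pi>A x} (\<pi>A ` Y) \<le> dist (\<pi>A x) (\<pi>A y)" using yb(2) by (simp add: setdist_le_dist)
    moreover have "setdist {\<pi>B x} (\<pi>B ` Y) \<le> dist (\<pi>B x) (\<pi>B y)" using yb(2) by (simp add: setdist_le_dist)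
    ultimately show "min (setdist {\<pi>A x} (\<pi>A ` Y)) (setdist {\<pi>B x} (\<pi>B ` Y)) \<le> \<theta>" by linarith
  qed
qed

end
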